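(* Let $(M_1,M_2)$ and $(\widehat M_1,\widehat M_2)$ be two states of a duplex network with $|M_\ell|=|\widehat M_\ell|$ for $\ell=1,2$, and let $\mathcal K$ be the associated layer-labeled meta-graph. Then every connected component of $\mathcal K$ is a simple path or a cycle, and along any path component the edge labels alternate $1,2,1,2,\dots$.
   Context: A duplex network consists of directed graphs $G_1=(V,E_1)$, $G_2=(V,E_2)$ on a common finite node set $V$. For $\ell\in\{1,2\}$, $\mathcal B_\ell$ is the bipartite graph with vertex classes $V^+=\{v^+:v\in V\}$, $V^-=\{v^-:v\in V\}$ and an edge $\{u^+,v^-\}$ for each $(u,v)\in E_\ell$; a state is a pair $(M_1,M_2)$ where $M_\ell$ is a matching in $\mathcal B_\ell$. For each $\ell$, let $H_\ell$ be the graph on $V^+\cup V^-$ with edge set $M_\ell\triangle\widehat M_\ell$. The layer-labeled meta-graph $\mathcal K$ is the undirected multigraph on node set $V$ obtained by adding, for each $\ell\in\{1,2\}$ and each path component of $H_\ell$ whose two endpoints are $x^-,y^-\in V^-$, an edge $\{x,y\}$ with label $\ell$ (cycle components add no edge). *)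

theory Defs
  imports Main
begin

text \<open>Vertices of the bipartite graphs: the copies v+ and v- of a node v.\<close>
datatype 'v side = Plus 'v | Minus 'v

definition sides :: "'v set \<Rightarrow> 'v side set" where
  "sides V = Plus ` V \<union> Minus ` V"

definition bip_edges :: "('v \<times> 'v) set \<Rightarrow> 'v side set set" where
  "bip_edges E = (\<lambda>(u, v). {Plus u, Minus v}) ` E"

definition is_matching :: "('v \<times> 'v) set \<Rightarrow> 'v side set set \<Rightarrow> bool" where
  "is_matching E M \<longleftrightarrow> M \<subseteq> bip_edges E \<and>
     (\<forall>e\<in>M. \<forall>f\<in>M. e \<noteq> f \<longrightarrow> e \<inter> f = {})"

definition symdiff :: "'a set \<Rightarrow> 'a set \<Rightarrow> 'a set" where
  "symdiff A B = (A - B) \<union> (B - A)"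

definition adj :: "'a set set \<Rightarrow> ('a \<times> 'a) set" where
  "adj D = {(a, b). {a, b} \<in> D}"

definition components :: "'a set \<Rightarrow> 'a set set \<Rightarrow> 'a set set" where
  "components W D = {{w \<in> W. (a, w) \<in> (adj D)\<^sup>*} | a. a \<in> W}"

definition is_path_on :: "'a set set \<Rightarrow> 'a set \<Rightarrow> 'a list \<Rightarrow> bool" where
  "is_path_on D C vs \<longleftrightarrow> distinct vs \<and> 2 \<le> length vs \<and> set vs = C \<and>
     {e \<in> D. e \<subseteq> C} = {{vs ! i, vs ! (i + 1)} | i. i + 1 < length vs}"

definition path_component :: "'a set \<Rightarrow> 'a set set \<Rightarrow> 'a set \<Rightarrow> 'a \<Rightarrow> 'a \<Rightarrow> bool" where
  "path_component W D C a b \<longleftrightarrow> C \<in> components W D \<and>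
     (\<exists>vs. is_path_on D C vs \<and> hd vs = a \<and> last vs = b)"

text \<open>Layer-labeled meta-graph K. H l is the edge set of H_l (l = 1,2).
  Edges of K are pairs (l, C) with C a path component of H_l with both endpoints in V-;
  the label of edge (l, C) is l.\<close>
definition meta_edges :: "'v set \<Rightarrow> (nat \<Rightarrow> 'v side set set) \<Rightarrow> (nat \<times> 'v side set) set" where
  "meta_edges V H = {(l, C). l \<in> {1, 2} \<and>
      (\<exists>x y. path_component (sides V) (H l) C (Minus x) (Minus y))}"

definition meta_ends :: "'v set \<Rightarrow> (nat \<Rightarrow> 'v side set set) \<Rightarrow> nat \<times> 'v side set \<Rightarrow> 'v set" where
  "meta_ends V H e = {x. \<exists>y. path_component (sides V) (H (fst e)) (snd e) (Minus x) (Minus y)}"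

definition mg_components :: "'v set \<Rightarrow> 'e set \<Rightarrow> ('e \<Rightarrow> 'v set) \<Rightarrow> 'v set set" where
  "mg_components V KE ends =
     {{w \<in> V. (a, w) \<in> {(x, y). \<exists>e\<in>KE. ends e = {x, y}}\<^sup>*} | a. a \<in> V}"

end

theory Submission
  imports Defs
begin


lemma path_rev:
  assumes "is_path_on D C vs" shows "is_path_on D C (rev vs)"
proof -
  let ?n = "length vs"
  have e: "{{rev vs ! i, rev vs ! (i + 1)} | i. i + 1 < length (rev vs)} = {{vs ! i, vs ! (i + 1)} | i. i + 1 < ?n}"
  proof (intro set_eqI iffI)
    fix f assume "f \<in> {{rev vs ! i, rev vs ! (i + 1)} | i. i + 1 < length (rev vs)}"
    then obtain i where i: "i + 1 < ?n" "f = {rev vs ! i, rev vs ! (i + 1)}" by auto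
    have ar: "?n - 2 - i + 1 = ?n - 1 - i" using i by arith
    have a: "rev vs ! i = vs ! (?n - 1 - i)" "rev vs ! (i + 1) = vs ! (?n - 2 - i)"
      using i by (simp_all add: rev_nth)
    have "f = {vs ! (?n - 2 - i), vs ! (?n - 2 - i + 1)}" unfolding ar using i(2) a by (simp add: insert_commute)
    moreover have "?n - 2 - i + 1 < ?n" using i by auto
    ultimately show "f \<in> {{vs ! i, vs ! (i + 1)} | i. i + 1 < ?n}" by blast
  next
    fix f assume "f \<in> {{vs ! i, vs ! (i + 1)} | i. i + 1 < ?n}"
    then obtain i where i: "i + 1 < ?n" "f = {vs ! i, vs ! (i + 1)}" by auto
    have ar: "?n - 2 - i + 1 = ?n - 1 - i" using i by arith
    have a: "rev vs ! (?n - 2 - i) = vs ! (i + 1)" "rev vs ! (?n - 1 - i) = vs ! i"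
      using i by (simp_all add: rev_nth)
    have "f = {rev vs ! (?n - 2 - i), rev vs ! (?n - 2 - i + 1)}" unfolding ar using i(2) a by (simp add: insert_commute)
    moreover have "?n - 2 - i + 1 < length (rev vs)" using i by auto
    ultimately show "f \<in> {{rev vs ! i, rev vs ! (i + 1)} | i. i + 1 < length (rev vs)}" by blast
  qed
  show ?thesis using assms e unfolding is_path_on_def by simp
qed

lemma path_basic: "is_path_on D C vs \<Longrightarrow> distinct vs \<and> 2 \<le> length vs \<and> set vs = C"
  unfolding is_path_on_def by (elim conjE) (intro conjI)

lemma path_hd_deg:
  assumes "is_path_on D C vs" "f \<in> D" "f \<subseteq> C" "hd vs \<in> f"
  shows "f = {vs ! 0, vs ! 1}"
proof -
  have E: "{e \<in> D. e \<subseteq> C} = {{vs ! i, vs ! (i + 1)} | i. i + 1 < length vs}"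
    using assms(1) unfolding is_path_on_def by (elim conjE) assumption
  have "f \<in> {e \<in> D. e \<subseteq> C}" using assms(2,3) by simp
  then have "f \<in> {{vs ! i, vs ! (i + 1)} | i. i + 1 < length vs}" by (simp only: E)
  then obtain i where i: "i + 1 < length vs" "f = {vs ! i, vs ! (i + 1)}" by blast
  have d: "distinct vs" and l: "2 \<le> length vs" using path_basic[OF assms(1)] by simp_all
  have h: "hd vs = vs ! 0" using l by (cases vs) auto
  have o: "vs ! 0 = vs ! i \<or> vs ! 0 = vs ! (i + 1)" using assms(4) unfolding i(2) h by simp
  have ne: "vs \<noteq> []" using l by auto
  have n1: "vs ! 0 \<noteq> vs ! (i + 1)" using nth_eq_iff_index_eq[OF d, of 0 "i+1"] i ne by simp
  have n2: "vs ! 0 = vs ! i \<Longrightarrow> i = 0" using nth_eq_iff_index_eq[OF d, of 0 i] i ne by simp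
  have "i = 0" using o n1 n2 by blast
  then show ?thesis using i by simp
qed

lemma path_interior:
  assumes "is_path_on D C vs" "0 < k" "k + 1 < length vs"
  shows "\<exists>f1 f2. f1 \<noteq> f2 \<and> f1 \<in> D \<and> f2 \<in> D \<and> f1 \<subseteq> C \<and> f2 \<subseteq> C \<and> vs ! k \<in> f1 \<and> vs ! k \<in> f2"
proof -
  have d: "distinct vs" using path_basic[OF assms(1)] by simp
  have E: "{e \<in> D. e \<subseteq> C} = {{vs ! i, vs ! (i + 1)} | i. i + 1 < length vs}"
    using assms(1) unfolding is_path_on_def by (elim conjE) assumption
  have k1: "k - 1 + 1 = k" "k - 1 + 1 < length vs" using assms by auto
  have f1: "{vs ! (k - 1), vs ! k} \<in> {e \<in> D. e \<subseteq> C}" unfolding E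
  proof (rule CollectI, rule exI[of _ "k - 1"], rule conjI)
    show "{vs ! (k - 1), vs ! k} = {vs ! (k - 1), vs ! (k - 1 + 1)}" using k1 by simp
  qed (rule k1(2))
  have f2: "{vs ! k, vs ! (k + 1)} \<in> {e \<in> D. e \<subseteq> C}" unfolding E
    by (rule CollectI, rule exI[of _ k], rule conjI, rule refl, rule assms(3))
  have "vs ! (k - 1) \<noteq> vs ! k" "vs ! (k - 1) \<noteq> vs ! (k + 1)"
    using nth_eq_iff_index_eq[OF d, of "k - 1" k] nth_eq_iff_index_eq[OF d, of "k - 1" "k + 1"] assms by auto
  then have "{vs ! (k - 1), vs ! k} \<noteq> {vs ! k, vs ! (k + 1)}"
  proof (intro notI)
    assume "{vs ! (k - 1), vs ! k} = {vs ! k, vs ! (k + 1)}"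
    then have "vs ! (k - 1) \<in> {vs ! k, vs ! (k + 1)}" by (metis insertI1)
    then show False using \<open>vs ! (k - 1) \<noteq> vs ! k\<close> \<open>vs ! (k - 1) \<noteq> vs ! (k + 1)\<close> by simp
  qed
  moreover have "vs ! k \<in> {vs ! (k - 1), vs ! k}" "vs ! k \<in> {vs ! k, vs ! (k + 1)}" by simp_all
  ultimately show ?thesis using f1 f2 by (intro exI[of _ "{vs ! (k - 1), vs ! k}"] exI[of _ "{vs ! k, vs ! (k + 1)}"]) simp
qed

lemma path_ends:
  assumes "is_path_on D C vs" "is_path_on D C vs'"
  shows "hd vs' \<in> {hd vs, last vs}"
proof -
  have l: "2 \<le> length vs" "2 \<le> length vs'" and s: "set vs = C" "set vs' = C"
    using path_basic[OF assms(1)] path_basic[OF assms(2)] by simp_all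
  have ne': "vs' \<noteq> []" using l by auto
  have "hd vs' \<in> set vs" using hd_in_set[OF ne'] s by simp
  then obtain k where k: "k < length vs" "vs ! k = hd vs'" unfolding in_set_conv_nth by blast
  show ?thesis
  proof (cases "0 < k \<and> k + 1 < length vs")
    case True
    have "\<exists>f1 f2. f1 \<noteq> f2 \<and> f1 \<in> D \<and> f2 \<in> D \<and> f1 \<subseteq> C \<and> f2 \<subseteq> C \<and> vs ! k \<in> f1 \<and> vs ! k \<in> f2"
      using path_interior[OF assms(1), of k] True by simp
    then obtain f1 f2 where f: "f1 \<noteq> f2" "f1 \<in> D" "f2 \<in> D" "f1 \<subseteq> C" "f2 \<subseteq> C" "vs ! k \<in> f1" "vs ! k \<in> f2"
      by metis
    have "f1 = {vs' ! 0, vs' ! 1}" using path_hd_deg[OF assms(2) f(2) f(4)] f(6) k(2) by simp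
    moreover have "f2 = {vs' ! 0, vs' ! 1}" using path_hd_deg[OF assms(2) f(3) f(5)] f(7) k(2) by simp
    ultimately show ?thesis using f(1) by simp
  next
    case False
    then have "k = 0 \<or> k = length vs - 1" using k by auto
    moreover have "vs \<noteq> []" using l by auto
    moreover have "hd vs = vs ! 0" "last vs = vs ! (length vs - 1)" using \<open>vs \<noteq> []\<close> by (simp_all add: hd_conv_nth last_conv_nth)
    ultimately show ?thesis using k(2) by auto
  qed
qed

lemma comp_eq:
  assumes "C1 \<in> components W D" "C2 \<in> components W D" "x \<in> C1" "x \<in> C2"
  shows "C1 = C2"
proof -
  have sy: "sym ((adj D)\<^sup>*)" by (rule sym_rtrancl) (auto simp: sym_def adj_def insert_commute)
  have key: "Ci = {w \<in> W. (x, w) \<in> (adj D)\<^sup>*}" if "Ci \<in> components W D" "x \<in> Ci" for Ci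
  proof -
    from that obtain a where a: "Ci = {w \<in> W. (a, w) \<in> (adj D)\<^sup>*}" unfolding components_def by auto
    then have "(a, x) \<in> (adj D)\<^sup>*" using that by auto
    then have "(x, a) \<in> (adj D)\<^sup>*" using sy by (meson symD)
    then show ?thesis using a \<open>(a, x) \<in> _\<close> by (auto intro: rtrancl_trans)
  qed
  show ?thesis using key[OF assms(1,3)] key[OF assms(2,4)] by simp
qed

lemma meta_two:
  assumes "e \<in> meta_edges V H"
  shows "\<exists>a b. a \<noteq> b \<and> meta_ends V H e = {a, b} \<and> a \<in> V \<and> b \<in> V"
proof -
  obtain l C where e: "e = (l, C)" by force
  from assms obtain x y where p: "path_component (sides V) (H l) C (Minus x) (Minus y)"
    unfolding meta_edges_def e by auto
  then obtain vs where vs: "C \<in> components (sides V) (H l)" "is_path_on (H l) C vs" "hd vs = Minus x" "last vs = Minus y"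
    unfolding path_component_def by auto
  have l: "2 \<le> length vs" "distinct vs" "set vs = C" using path_basic[OF vs(2)] by simp_all
  have ne: "vs \<noteq> []" using l by auto
  have "vs ! 0 \<noteq> vs ! (length vs - 1)" using nth_eq_iff_index_eq[OF l(2), of 0 "length vs - 1"] l ne by simp
  then have "hd vs \<noteq> last vs" using ne by (simp add: hd_conv_nth last_conv_nth)
  then have xy: "x \<noteq> y" using vs by auto
  have Csub: "C \<subseteq> sides V" using vs(1) unfolding components_def by auto
  have "Minus x \<in> C" "Minus y \<in> C" using l vs by (metis hd_in_set last_in_set list.size(3) not_numeral_le_zero)+
  then have V: "x \<in> V" "y \<in> V" using Csub unfolding sides_def by auto
  have p2: "path_component (sides V) (H l) C (Minus y) (Minus x)"
    unfolding path_component_def using vs path_rev[OF vs(2)] by (intro conjI exI[of _ "rev vs"]) (auto simp: hd_rev last_rev)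
  have "meta_ends V H e = {x, y}"
  proof (intro set_eqI iffI)
    fix z assume "z \<in> meta_ends V H e"
    then obtain w where "path_component (sides V) (H l) C (Minus z) (Minus w)"
      unfolding meta_ends_def e by auto
    then obtain vs' where vs': "is_path_on (H l) C vs'" "hd vs' = Minus z" unfolding path_component_def by auto
    have "Minus z \<in> {Minus x, Minus y}" using path_ends[OF vs(2) vs'(1)] vs'(2) vs(3,4) by simp
    then show "z \<in> {x, y}" by auto
  next
    fix z assume "z \<in> {x, y}"
    then show "z \<in> meta_ends V H e" using p p2 unfolding meta_ends_def e by auto
  qed
  then show ?thesis using xy V by blast
qed

lemma meta_lab: "e \<in> meta_edges V H \<Longrightarrow> fst e \<in> {1, 2}"
  unfolding meta_edges_def by auto

lemma meta_uniq:
  assumes "e1 \<in> meta_edges V H" "e2 \<in> meta_edges V H" "x \<in> meta_ends V H e1" "x \<in> meta_ends V H e2"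
    "fst e1 = fst e2"
  shows "e1 = e2"
proof -
  obtain l C1 where e1: "e1 = (l, C1)" by (cases e1)
  obtain C2 where e2: "e2 = (l, C2)" using assms(5) e1 by (cases e2) simp
  have m: "Minus x \<in> C \<and> C \<in> components (sides V) (H l)" if "x \<in> meta_ends V H (l, C)" for C
  proof -
    from that obtain y where "path_component (sides V) (H l) C (Minus x) (Minus y)"
      unfolding meta_ends_def by auto
    then obtain vs where vs: "C \<in> components (sides V) (H l)" "is_path_on (H l) C vs" "hd vs = Minus x"
      unfolding path_component_def by auto
    then have "vs \<noteq> []" "set vs = C" using path_basic[of "H l" C vs] by auto
    then have "Minus x \<in> C" using vs(3) hd_in_set by metis
    then show ?thesis using vs(1) by simp
  qed
  have a1: "Minus x \<in> C1" "C1 \<in> components (sides V) (H l)" using m[of C1] assms(3) unfolding e1 by auto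
  have a2: "Minus x \<in> C2" "C2 \<in> components (sides V) (H l)" using m[of C2] assms(4) unfolding e2 by auto
  have "C1 = C2" using comp_eq[OF a1(2) a2(2) a1(1) a2(1)] .
  then show ?thesis using e1 e2 by simp
qed



definition ispath :: "('e \<Rightarrow> 'v set) \<Rightarrow> 'e set \<Rightarrow> 'v set \<Rightarrow> 'v list \<Rightarrow> 'e list \<Rightarrow> bool" where
  "ispath ends KE C vs es \<longleftrightarrow> distinct vs \<and> distinct es \<and> set es \<subseteq> KE \<and> length vs = length es + 1
     \<and> (\<forall>i<length es. ends (es ! i) = {vs ! i, vs ! (i + 1)}) \<and> set vs \<subseteq> C"

lemma ispath_rev:
  assumes "ispath ends KE C vs es" shows "ispath ends KE C (rev vs) (rev es)"
proof -
  let ?n = "length es"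
  have P: "distinct vs" "distinct es" "set es \<subseteq> KE" "length vs = ?n + 1"
    "\<And>i. i < ?n \<Longrightarrow> ends (es ! i) = {vs ! i, vs ! (i + 1)}" "set vs \<subseteq> C"
    using assms unfolding ispath_def by auto
  have "ends (rev es ! i) = {rev vs ! i, rev vs ! (i + 1)}" if i: "i < ?n" for i
  proof -
    have ar: "?n - 1 - i + 1 = ?n - i" using i by arith
    have a: "rev es ! i = es ! (?n - 1 - i)" "rev vs ! i = vs ! (?n - i)" "rev vs ! (i + 1) = vs ! (?n - 1 - i)"
      using i P(4) by (simp_all add: rev_nth)
    have "ends (es ! (?n - 1 - i)) = {vs ! (?n - 1 - i), vs ! (?n - 1 - i + 1)}" using P(5) i by simp
    then show ?thesis unfolding a using ar by (simp add: insert_commute)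
  qed
  then show ?thesis using P unfolding ispath_def by simp
qed

definition cycrep :: "(nat \<times> 'c) set \<Rightarrow> (nat \<times> 'c \<Rightarrow> 'v set) \<Rightarrow> 'v set \<Rightarrow> bool" where
  "cycrep KE ends C \<longleftrightarrow> (\<exists>vs es. distinct vs \<and> set vs = C \<and> distinct es
        \<and> set es = {e \<in> KE. ends e \<subseteq> C} \<and> length vs = length es \<and> 2 \<le> length vs
        \<and> (\<forall>i < length es. ends (es ! i) = {vs ! i, vs ! ((i + 1) mod length vs)}))"

definition pathrep :: "(nat \<times> 'c) set \<Rightarrow> (nat \<times> 'c \<Rightarrow> 'v set) \<Rightarrow> 'v set \<Rightarrow> bool" where
  "pathrep KE ends C \<longleftrightarrow> (\<exists>vs es. distinct vs \<and> set vs = C \<and> distinct es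
        \<and> set es = {e \<in> KE. ends e \<subseteq> C} \<and> length vs = length es + 1
        \<and> (\<forall>i < length es. ends (es ! i) = {vs ! i, vs ! (i + 1)})
        \<and> (\<forall>i. i + 1 < length es \<longrightarrow> fst (es ! i) \<noteq> fst (es ! (i + 1))))"

context
  fixes V :: "'v set" and KE :: "(nat \<times> 'c) set" and ends :: "nat \<times> 'c \<Rightarrow> 'v set"
    and a :: 'v and C :: "'v set"
  assumes two: "\<And>e. e \<in> KE \<Longrightarrow> \<exists>p q. p \<noteq> q \<and> ends e = {p, q} \<and> p \<in> V \<and> q \<in> V"
    and lab: "\<And>e. e \<in> KE \<Longrightarrow> fst e \<in> {1, 2}"
    and uniq: "\<And>e1 e2 x. e1 \<in> KE \<Longrightarrow> e2 \<in> KE \<Longrightarrow> x \<in> ends e1 \<Longrightarrow> x \<in> ends e2 \<Longrightarrow> fst e1 = fst e2 \<Longrightarrow> e1 = e2"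
    and finV: "finite V" and aV: "a \<in> V"
    and Cdef: "C = {w \<in> V. (a, w) \<in> {(x, y). \<exists>e\<in>KE. ends e = {x, y}}\<^sup>*}"
begin

lemma deg2:
  assumes "e1 \<in> KE" "e2 \<in> KE" "e1 \<noteq> e2" "x \<in> ends e1" "x \<in> ends e2" "f \<in> KE" "x \<in> ends f"
  shows "f = e1 \<or> f = e2"
proof -
  have "fst e1 \<noteq> fst e2" using uniq[OF assms(1,2,4,5)] assms(3) by blast
  then have "fst f = fst e1 \<or> fst f = fst e2" using lab[OF assms(1)] lab[OF assms(2)] lab[OF assms(6)] by auto
  then show ?thesis using uniq[OF assms(6,1,7,4)] uniq[OF assms(6,2,7,5)] by blast
qed

lemma C_step:
  assumes "x \<in> C" "e \<in> KE" "ends e = {x, y}" shows "y \<in> C"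
proof -
  obtain p q where pq: "ends e = {p, q}" "p \<in> V" "q \<in> V" using two[OF assms(2)] by blast
  have "y \<in> ends e" using assms(3) by simp
  then have yV: "y \<in> V" using pq by auto
  have "(x, y) \<in> {(x, y). \<exists>e\<in>KE. ends e = {x, y}}" using assms(2,3) by blast
  moreover have "(a, x) \<in> {(x, y). \<exists>e\<in>KE. ends e = {x, y}}\<^sup>*" using assms(1) Cdef by simp
  ultimately have "(a, y) \<in> {(x, y). \<exists>e\<in>KE. ends e = {x, y}}\<^sup>*" by (rule rtrancl_into_rtrancl[rotated])
  then show ?thesis using yV Cdef by simp
qed

lemma aC: "a \<in> C" using aV Cdef by simp

lemma finC: "finite C" using finV Cdef by simp

lemma closure:
  assumes "set vs \<subseteq> C" "vs \<noteq> []"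
    "\<And>x f. x \<in> set vs \<Longrightarrow> f \<in> KE \<Longrightarrow> x \<in> ends f \<Longrightarrow> f \<in> set es"
    "\<And>f. f \<in> set es \<Longrightarrow> ends f \<subseteq> set vs" "set es \<subseteq> KE"
  shows "set vs = C \<and> set es = {e \<in> KE. ends e \<subseteq> C}"
proof -
  define R where "R = {(x, y). \<exists>e\<in>KE. ends e = {x, y}}"
  have Cd: "C = {w \<in> V. (a, w) \<in> R\<^sup>*}" using Cdef R_def by simp
  have symR: "sym (R\<^sup>*)" by (rule sym_rtrancl) (auto simp: sym_def R_def insert_commute)
  obtain v where v: "v \<in> set vs" using assms(2) by (cases vs) auto
  have "(a, v) \<in> R\<^sup>*" using v assms(1) Cd by auto
  then have va: "(v, a) \<in> R\<^sup>*" using symR by (meson symD)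
  have "w \<in> set vs" if "w \<in> C" for w
  proof -
    have "(a, w) \<in> R\<^sup>*" using that Cd by auto
    with va have "(v, w) \<in> R\<^sup>*" by (rule rtrancl_trans)
    then show ?thesis
    proof (induction rule: rtrancl_induct)
      case base
      show ?case using v .
    next
      case (step y z)
      then obtain e where e: "e \<in> KE" "ends e = {y, z}" unfolding R_def by auto
      then have "e \<in> set es" using assms(3) step by auto
      then show "z \<in> set vs" using assms(4)[OF \<open>e \<in> set es\<close>] e(2) by auto
    qed
  qed
  then have eq: "set vs = C" using assms(1) by auto
  have "set es = {e \<in> KE. ends e \<subseteq> C}"
  proof (intro set_eqI iffI)
    fix e assume "e \<in> set es" then show "e \<in> {e \<in> KE. ends e \<subseteq> C}" using assms(4,5) eq by auto
  next
    fix e assume "e \<in> {e \<in> KE. ends e \<subseteq> C}"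
    then have e: "e \<in> KE" "ends e \<subseteq> C" by auto
    obtain p q where pq: "ends e = {p, q}" using two[OF e(1)] by auto
    then have "p \<in> set vs" using e eq by auto
    then show "e \<in> set es" using assms(3) e(1) pq by auto
  qed
  then show ?thesis using eq by simp
qed

lemma caseA:
  assumes P: "ispath ends KE C vs es"
    and mx: "\<And>vs' es'. ispath ends KE C vs' es' \<Longrightarrow> length es' \<le> length es"
    and e: "e \<in> KE" "last vs \<in> ends e" "e \<notin> set es"
  shows "cycrep KE ends C"
proof -
  define n where "n = length es"
  have P': "distinct vs" "distinct es" "set es \<subseteq> KE" "length vs = n + 1"
    "\<And>i. i < n \<Longrightarrow> ends (es ! i) = {vs ! i, vs ! (i + 1)}" "set vs \<subseteq> C"
    using P unfolding ispath_def n_def by auto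
  have ne: "vs \<noteq> []" using P'(4) by auto
  have lastn: "last vs = vs ! n" using ne P'(4) by (simp add: last_conv_nth)
  have esK: "es ! i \<in> KE" if "i < n" for i using P'(3) that n_def by auto
  have ein: "vs ! i \<in> ends (es ! i)" "vs ! (i + 1) \<in> ends (es ! i)" if "i < n" for i
    using P'(5)[OF that] by auto
  obtain p q where pq: "p \<noteq> q" "ends e = {p, q}" using two[OF e(1)] by blast
  obtain w where w: "w \<noteq> vs ! n" "ends e = {vs ! n, w}"
  proof (cases "vs ! n = p")
    case True
    then show ?thesis using that[of q] pq by simp
  next
    case False
    then have "vs ! n = q" using e(2) lastn pq by auto
    then show ?thesis using that[of p] pq by (simp add: insert_commute)
  qed
  have vnC: "vs ! n \<in> C" using P'(4,6) by (simp add: subset_iff)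
  have wC: "w \<in> C" using C_step[OF vnC e(1) w(2)] .
  have "w \<in> set vs"
  proof (rule ccontr)
    assume wn: "w \<notin> set vs"
    have "ispath ends KE C (vs @ [w]) (es @ [e])"
      unfolding ispath_def
    proof (intro conjI allI impI)
      show "distinct (vs @ [w])" using P'(1) wn by simp
      show "distinct (es @ [e])" using P'(2) e(3) by simp
      show "set (es @ [e]) \<subseteq> KE" using P'(3) e(1) by simp
      show "length (vs @ [w]) = length (es @ [e]) + 1" using P'(4) n_def by simp
      show "set (vs @ [w]) \<subseteq> C" using P'(6) wC by simp
      fix i assume i: "i < length (es @ [e])"
      show "ends ((es @ [e]) ! i) = {(vs @ [w]) ! i, (vs @ [w]) ! (i + 1)}"
      proof (cases "i < n")
        case True
        then show ?thesis using P'(4,5) n_def by (simp add: nth_append)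
      next
        case False
        then have "i = n" using i n_def by simp
        then show ?thesis using P'(4) n_def w(2) by (simp add: nth_append)
      qed
    qed
    then have "length (es @ [e]) \<le> n" using mx n_def by blast
    then show False using n_def by simp
  qed
  then have "\<exists>j<n + 1. vs ! j = w" using P'(4) by (simp add: in_set_conv_nth)
  then obtain j where j: "j < n + 1" "vs ! j = w" by auto
  have jn: "j \<noteq> n" using w(1) j(2) by auto
  have j0: "j = 0"
  proof (rule ccontr)
    assume "j \<noteq> 0"
    then have jj: "j - 1 < n" "j < n" "j - 1 + 1 = j" using j jn by auto
    have e1: "vs ! j \<in> ends (es ! (j - 1))" using ein(2)[OF jj(1)] jj(3) by simp
    have e2: "vs ! j \<in> ends (es ! j)" using ein(1)[OF jj(2)] .
    have "es ! (j - 1) \<noteq> es ! j" using nth_eq_iff_index_eq[OF P'(2), of "j - 1" j] jj n_def by simp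
    then have "e = es ! (j - 1) \<or> e = es ! j"
      using deg2[OF esK[OF jj(1)] esK[OF jj(2)] _ e1 e2 e(1)] w(2) j(2) by simp
    then show False using e(3) jj n_def by (metis nth_mem)
  qed
  have n1: "1 \<le> n" using jn j0 by simp
  have w0: "w = vs ! 0" using j0 j(2) by simp
  define es' where "es' = es @ [e]"
  have es'n: "es' ! n = e" "\<And>i. i < n \<Longrightarrow> es' ! i = es ! i" unfolding es'_def using n_def by (simp_all add: nth_append)
  have cyc: "ends (es' ! i) = {vs ! i, vs ! ((i + 1) mod length vs)}" if i: "i < length es'" for i
  proof (cases "i < n")
    case True
    then show ?thesis using es'n(2)[OF True] P'(4,5) by simp
  next
    case False
    then have "i = n" using i es'_def n_def by simp
    then show ?thesis using es'n(1) P'(4) w(2) w0 by simp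
  qed
  have cl: "set vs = C \<and> set es' = {e \<in> KE. ends e \<subseteq> C}"
  proof (rule closure)
    show "set vs \<subseteq> C" by (rule P'(6))
    show "vs \<noteq> []" by (rule ne)
    show "set es' \<subseteq> KE" using P'(3) e(1) es'_def by simp
    show "ends f \<subseteq> set vs" if "f \<in> set es'" for f
    proof -
      have "f \<in> set es \<or> f = e" using that es'_def by auto
      then show ?thesis
      proof
        assume "f \<in> set es"
        then have "\<exists>i<n. es ! i = f" using n_def by (simp add: in_set_conv_nth)
        then obtain i where i: "i < n" "f = es ! i" by auto
        then show ?thesis using P'(4,5) by (simp add: nth_mem)
      next
        assume "f = e"
        then show ?thesis using w(2) w0 P'(4) by (simp add: nth_mem)
      qed
    qed
    show "f \<in> set es'" if x: "x \<in> set vs" "f \<in> KE" "x \<in> ends f" for x f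
    proof -
      have "\<exists>k<n + 1. vs ! k = x" using x(1) P'(4) by (simp add: in_set_conv_nth)
          then obtain k where k: "k < n + 1" "vs ! k = x" by auto
      have inset: "es ! i \<in> set es'" if "i < n" for i using that n_def es'_def by simp
      have einset: "e \<in> set es'" using es'_def by simp
      consider "k = 0" | "0 < k \<and> k < n" | "k = n" using k by linarith
      then show ?thesis
      proof cases
        case 1
        have "e \<noteq> es ! 0" using e(3) n1 n_def by (metis less_le_trans nth_mem zero_less_one)
        moreover have "x \<in> ends e" using 1 k w(2) w0 by simp
        moreover have "x \<in> ends (es ! 0)" using 1 k ein(1)[of 0] n1 by simp
        ultimately have "f = e \<or> f = es ! 0" using deg2[OF e(1) esK[of 0] _ _ _ x(2,3)] n1 by simp
        then show ?thesis using inset[of 0] einset n1 by auto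
      next
        case 2
        then have jj: "k - 1 < n" "k < n" "k - 1 + 1 = k" by auto
        have e1: "x \<in> ends (es ! (k - 1))" using ein(2)[OF jj(1)] jj(3) k(2) by simp
        have e2: "x \<in> ends (es ! k)" using ein(1)[OF jj(2)] k(2) by simp
        have "es ! (k - 1) \<noteq> es ! k" using nth_eq_iff_index_eq[OF P'(2), of "k - 1" k] jj n_def by simp
        then have "f = es ! (k - 1) \<or> f = es ! k"
          using deg2[OF esK[OF jj(1)] esK[OF jj(2)] _ e1 e2 x(2,3)] by simp
        then show ?thesis using inset jj by auto
      next
        case 3
        have jj: "n - 1 < n" "n - 1 + 1 = n" using n1 by auto
        have "e \<noteq> es ! (n - 1)" using e(3) jj n_def by (metis nth_mem)
        moreover have "x \<in> ends e" using 3 k w(2) by simp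
        moreover have "x \<in> ends (es ! (n - 1))" using 3 k ein(2)[OF jj(1)] jj(2) by simp
        ultimately have "f = e \<or> f = es ! (n - 1)" using deg2[OF e(1) esK[OF jj(1)] _ _ _ x(2,3)] by simp
        then show ?thesis using inset[OF jj(1)] einset by auto
      qed
    qed
  qed
  have "distinct es'" using P'(2) e(3) es'_def by simp
  moreover have "length vs = length es'" using P'(4) n_def es'_def by simp
  moreover have "2 \<le> length vs" using P'(4) n1 by simp
  ultimately show ?thesis unfolding cycrep_def using P'(1) cl cyc by blast
qed


lemma comp_shape: "pathrep KE ends C \<or> cycrep KE ends C"
proof -
  define P where "P = (\<lambda>x. ispath ends KE C (fst x) (snd x))"
  have P0: "P ([a], [])" unfolding P_def ispath_def using aC by simp
  have bd: "\<forall>y. P y \<longrightarrow> length (snd y) < card C + 1"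
  proof (intro allI impI)
    fix y assume "P y"
    then have h: "distinct (fst y)" "length (fst y) = length (snd y) + 1" "set (fst y) \<subseteq> C"
      unfolding P_def ispath_def by auto
    have "length (fst y) \<le> card C" using distinct_card[OF h(1)] card_mono[OF finC h(3)] by simp
    then show "length (snd y) < card C + 1" using h(2) by simp
  qed
  obtain x where x: "P x" "\<forall>y. P y \<longrightarrow> length (snd y) \<le> length (snd x)"
    using ex_has_greatest_nat[OF P0 bd] by blast
  define vs where "vs = fst x"
  define es where "es = snd x"
  have Pv: "ispath ends KE C vs es" using x(1) unfolding P_def vs_def es_def by simp
  have mx: "length es' \<le> length es" if "ispath ends KE C vs' es'" for vs' es'
    using x(2)[rule_format, of "(vs', es')"] that unfolding P_def es_def by simp
  show ?thesis
  proof (cases "\<exists>e\<in>KE. last vs \<in> ends e \<and> e \<notin> set es")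
    case True
    then obtain e where e: "e \<in> KE" "last vs \<in> ends e" "e \<notin> set es" by blast
    show ?thesis using caseA[OF Pv mx e] by simp
  next
    case F1: False
    show ?thesis
    proof (cases "\<exists>e\<in>KE. hd vs \<in> ends e \<and> e \<notin> set es")
      case True
      then obtain e where e: "e \<in> KE" "hd vs \<in> ends e" "e \<notin> set es" by blast
      have Pr: "ispath ends KE C (rev vs) (rev es)" using ispath_rev[OF Pv] .
      have mxr: "length es' \<le> length (rev es)" if "ispath ends KE C vs' es'" for vs' es'
        using mx[OF that] by simp
      have "vs \<noteq> []" using Pv unfolding ispath_def by auto
      then have "last (rev vs) \<in> ends e" using e(2) by (simp add: last_rev)
      moreover have "e \<notin> set (rev es)" using e(3) by simp
      ultimately show ?thesis using caseA[OF Pr mxr e(1)] by simp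
    next
      case F2: False
      define n where "n = length es"
      have P': "distinct vs" "distinct es" "set es \<subseteq> KE" "length vs = n + 1"
        "\<And>i. i < n \<Longrightarrow> ends (es ! i) = {vs ! i, vs ! (i + 1)}" "set vs \<subseteq> C"
        using Pv unfolding ispath_def n_def by auto
      have ne: "vs \<noteq> []" using P'(4) by auto
      have esK: "es ! i \<in> KE" if "i < n" for i using P'(3) that n_def by auto
      have ein: "vs ! i \<in> ends (es ! i)" "vs ! (i + 1) \<in> ends (es ! i)" if "i < n" for i
        using P'(5)[OF that] by auto
      have cl: "set vs = C \<and> set es = {e \<in> KE. ends e \<subseteq> C}"
      proof (rule closure)
        show "set vs \<subseteq> C" by (rule P'(6))
        show "vs \<noteq> []" by (rule ne)
        show "set es \<subseteq> KE" by (rule P'(3))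
        show "ends f \<subseteq> set vs" if "f \<in> set es" for f
        proof -
          have "\<exists>i<n. es ! i = f" using that n_def by (simp add: in_set_conv_nth)
          then obtain i where i: "i < n" "f = es ! i" by auto
          then show ?thesis using P'(4,5) by (simp add: nth_mem)
        qed
        show "f \<in> set es" if x: "x \<in> set vs" "f \<in> KE" "x \<in> ends f" for x f
        proof -
          have "\<exists>k<n + 1. vs ! k = x" using x(1) P'(4) by (simp add: in_set_conv_nth)
          then obtain k where k: "k < n + 1" "vs ! k = x" by auto
          consider "k = 0" | "0 < k \<and> k < n" | "k = n" using k by linarith
          then show ?thesis
          proof cases
            case 1
            then have "x = hd vs" using k ne by (simp add: hd_conv_nth)
            then show ?thesis using F2 x(2,3) by blast
          next
            case 2
            then have jj: "k - 1 < n" "k < n" "k - 1 + 1 = k" by auto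
            have e1: "x \<in> ends (es ! (k - 1))" using ein(2)[OF jj(1)] jj(3) k(2) by simp
            have e2: "x \<in> ends (es ! k)" using ein(1)[OF jj(2)] k(2) by simp
            have "es ! (k - 1) \<noteq> es ! k" using nth_eq_iff_index_eq[OF P'(2), of "k - 1" k] jj n_def by simp
            then have "f = es ! (k - 1) \<or> f = es ! k"
              using deg2[OF esK[OF jj(1)] esK[OF jj(2)] _ e1 e2 x(2,3)] by simp
            then show ?thesis using jj n_def by auto
          next
            case 3
            then have "x = last vs" using k ne P'(4) by (simp add: last_conv_nth)
            then show ?thesis using F1 x(2,3) by blast
          qed
        qed
      qed
      have alt: "fst (es ! i) \<noteq> fst (es ! (i + 1))" if i: "i + 1 < n" for i
      proof
        assume eq: "fst (es ! i) = fst (es ! (i + 1))"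
        have "es ! i \<noteq> es ! (i + 1)" using nth_eq_iff_index_eq[OF P'(2), of i "i + 1"] i n_def by simp
        moreover have "es ! i = es ! (i + 1)"
          using uniq[OF esK esK ein(2) ein(1) eq] i by simp
        ultimately show False by simp
      qed
      show ?thesis unfolding pathrep_def
        using P'(1,2,4,5) cl alt n_def by blast
    qed
  qed
qed

end

theorem mainTheorem6:
  fixes V :: "'v set" and E1 E2 :: "('v \<times> 'v) set"
    and M1 M2 Mh1 Mh2 :: "'v side set set"
  assumes "finite V" and "E1 \<subseteq> V \<times> V" and "E2 \<subseteq> V \<times> V"
    and "is_matching E1 M1" and "is_matching E1 Mh1"
    and "is_matching E2 M2" and "is_matching E2 Mh2"
    and "card M1 = card Mh1" and "card M2 = card Mh2"
  defines "H \<equiv> (\<lambda>l::nat. if l = 1 then symdiff M1 Mh1 else symdiff M2 Mh2)"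
  defines "KE \<equiv> meta_edges V H" and "ends \<equiv> meta_ends V H"
  shows "\<forall>C \<in> mg_components V KE ends.
     (\<exists>vs es. distinct vs \<and> set vs = C \<and> distinct es
        \<and> set es = {e \<in> KE. ends e \<subseteq> C} \<and> length vs = length es + 1
        \<and> (\<forall>i < length es. ends (es ! i) = {vs ! i, vs ! (i + 1)})
        \<and> (\<forall>i. i + 1 < length es \<longrightarrow> fst (es ! i) \<noteq> fst (es ! (i + 1))))
   \<or> (\<exists>vs es. distinct vs \<and> set vs = C \<and> distinct es
        \<and> set es = {e \<in> KE. ends e \<subseteq> C} \<and> length vs = length es \<and> 2 \<le> length vs
        \<and> (\<forall>i < length es. ends (es ! i) = {vs ! i, vs ! ((i + 1) mod length vs)}))"
proof -
  have res: "pathrep KE ends C \<or> cycrep KE ends C" if "C \<in> mg_components V KE ends" for C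
  proof -

  from that obtain a where a: "a \<in> V" "C = {w \<in> V. (a, w) \<in> {(x, y). \<exists>e\<in>KE. ends e = {x, y}}\<^sup>*}"
    unfolding mg_components_def by blast
  have two: "\<exists>p q. p \<noteq> q \<and> ends e = {p, q} \<and> p \<in> V \<and> q \<in> V" if "e \<in> KE" for e
    using meta_two[of e V H] that unfolding KE_def ends_def by simp
  have lab: "fst e \<in> {1, 2}" if "e \<in> KE" for e
    using meta_lab[of e V H] that unfolding KE_def by simp
  have uniq: "e1 = e2" if "e1 \<in> KE" "e2 \<in> KE" "x \<in> ends e1" "x \<in> ends e2" "fst e1 = fst e2" for e1 e2 x
    using meta_uniq[of e1 V H e2 x] that unfolding KE_def ends_def by simp
  show ?thesis using comp_shape[where V=V and KE=KE and ends=ends and a=a and C=C, OF two lab uniq assms(1) a(1) a(2)] .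
  qed
  show ?thesis by (intro ballI) (rule res[unfolded pathrep_def cycrep_def])
qed

end
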